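(* For every $k\ge1$, $$A_{2k}=\{F_{2k}\}\cup\left\{(n+2)F_{2k}+\left\lfloor\frac{n+1}{\phi}\right\rfloor F_{2k-1}\ :\ n\ge 0\right\},$$ where $\phi=(1+\sqrt5)/2$.
   Context: Fibonacci numbers: $F_1=F_2=1$, $F_{n+1}=F_n+F_{n-1}$ for $n\ge2$. Chung–Graham decomposition: every positive integer $n$ has a unique representation $n=\sum_{i\ge1}c_iF_{2i}$ with $c_i\in\{0,1,2\}$, only finitely many nonzero, such that whenever $c_i=c_j=2$ with $i<j$ there is $k$ with $i<k<j$ and $c_k=0$. Let $\mathcal{CG}(n)$ be the set of $F_{2i}$ with $c_i\neq0$ in this decomposition. For $k\ge1$, $A_{2k}=\{n\ge1:\min\mathcal{CG}(n)=F_{2k}\}$. *)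

theory Defs
  imports Complex_Main "HOL-Number_Theory.Fib"
begin

text \<open>Fibonacci numbers: fib 1 = fib 2 = 1 (library fib, with fib 0 = 0).\<close>

definition phi :: real where "phi = (1 + sqrt 5) / 2"

definition is_CG :: "nat \<Rightarrow> (nat \<Rightarrow> nat) \<Rightarrow> bool" where
  "is_CG n c \<longleftrightarrow>
     c 0 = 0 \<and> (\<forall>i. c i \<le> 2) \<and> finite {i. c i \<noteq> 0} \<and>
     n = (\<Sum>i\<in>{i. c i \<noteq> 0}. c i * fib (2 * i)) \<and>
     (\<forall>i j. 1 \<le> i \<and> i < j \<and> c i = 2 \<and> c j = 2 \<longrightarrow> (\<exists>k. i < k \<and> k < j \<and> c k = 0))"

definition CG_coeffs :: "nat \<Rightarrow> nat \<Rightarrow> nat" where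
  "CG_coeffs n = (THE c. is_CG n c)"

definition CG :: "nat \<Rightarrow> nat set" where
  "CG n = {fib (2 * i) | i. 1 \<le> i \<and> CG_coeffs n i \<noteq> 0}"

definition A :: "nat \<Rightarrow> nat set" where
  "A k = {n. 1 \<le> n \<and> Min (CG n) = fib (2 * k)}"

end

theory Submission
  imports Defs
begin


definition vld :: "(nat \<Rightarrow> nat) \<Rightarrow> bool" where
  "vld c \<longleftrightarrow> (\<forall>i j. i < j \<and> c i = 2 \<and> c j = 2 \<longrightarrow> (\<exists>k. i < k \<and> k < j \<and> c k = 0))"

definition Qc :: "(nat \<Rightarrow> nat) \<Rightarrow> nat \<Rightarrow> bool" where
  "Qc c m \<longleftrightarrow> (\<forall>j<m. c j = 2 \<longrightarrow> (\<exists>k. j < k \<and> k < m \<and> c k = 0))"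

definition S :: "(nat \<Rightarrow> nat) \<Rightarrow> nat \<Rightarrow> nat" where
  "S c m = (\<Sum>i<m. c i * fib (2 * i))"

lemma fib_2m: "fib (2 * Suc m + 2) = fib (2 * Suc m + 1) + fib (2 * Suc m)"
  using fib_plus_2[of "2 * Suc m"] by simp

lemma S_bound:
  assumes v: "vld c" and le: "\<forall>i. c i \<le> 2" and c0: "c 0 = 0"
  shows "S c (Suc m) < fib (2 * Suc m) \<and> (Qc c (Suc m) \<longrightarrow> S c (Suc m) < fib (2 * Suc m - 1))"
proof (induction m)
  case 0
  then show ?case by (simp add: S_def c0)
next
  case (Suc m)
  let ?a = "c (Suc m)"
  have SS: "S c (Suc (Suc m)) = S c (Suc m) + ?a * fib (2 * Suc m)" by (simp add: S_def)
  have f1: "fib (2 * Suc (Suc m)) = fib (2 * Suc m + 1) + fib (2 * Suc m)"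
    using fib_2m[of m] by (simp add: algebra_simps)
  have f2: "fib (2 * Suc (Suc m) - 1) = fib (2 * Suc m) + fib (2 * Suc m - 1)"
    using fib_plus_2[of "2*m+1"] by (simp add: algebra_simps)
  have f3: "fib (2 * Suc m + 1) = fib (2 * Suc m) + fib (2 * Suc m - 1)"
    using fib_plus_2[of "2*m+1"] by (simp add: algebra_simps)
  have mono: "fib (2 * Suc m) \<le> fib (2 * Suc m + 1)" by (rule fib_mono) simp
  have "?a = 0 \<or> ?a = 1 \<or> ?a = 2" using le[rule_format, of "Suc m"] by auto
  then show ?case
  proof (elim disjE)
    assume a: "?a = 0"
    show ?thesis using Suc.IH SS f1 f2 f3 mono a by simp
  next
    assume a: "?a = 1"
    have q: "Qc c (Suc (Suc m)) \<Longrightarrow> Qc c (Suc m)"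
      unfolding Qc_def
    proof (intro allI impI)
      fix j assume Q: "\<forall>j<Suc (Suc m). c j = 2 \<longrightarrow> (\<exists>k>j. k < Suc (Suc m) \<and> c k = 0)"
        and j: "j < Suc m" "c j = 2"
      obtain k where k: "j < k" "k < Suc (Suc m)" "c k = 0" using Q j(2) less_SucI[OF j(1)] by blast
      with a have "k \<noteq> Suc m" by auto
      with k show "\<exists>k>j. k < Suc m \<and> c k = 0" by auto
    qed
    show ?thesis using Suc.IH SS f1 f2 f3 mono a q by auto
  next
    assume a: "?a = 2"
    have nq: "\<not> Qc c (Suc (Suc m))" unfolding Qc_def using a by force
    have q: "Qc c (Suc m)" unfolding Qc_def
    proof (intro allI impI)
      fix j assume j: "j < Suc m" "c j = 2"
      then show "\<exists>k>j. k < Suc m \<and> c k = 0" using v a unfolding vld_def by fastforce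
    qed
    show ?thesis using Suc.IH SS f1 f2 f3 mono a q nq by auto
  qed
qed

lemma S_Suc: "S c (Suc m) = S c m + c m * fib (2 * m)" by (simp add: S_def)

lemma S_unique:
  assumes v: "vld c" "vld c'" and le: "\<forall>i. c i \<le> 2" "\<forall>i. c' i \<le> 2" and c0: "c 0 = 0" "c' 0 = 0"
  shows "S c m = S c' m \<Longrightarrow> i < m \<Longrightarrow> c i = c' i"
proof (induction m arbitrary: i)
  case 0 then show ?case by simp
next
  case (Suc m)
  show ?case
  proof (cases "c m = c' m")
    case True
    then have "S c m = S c' m" using Suc.prems(1) by (simp add: S_Suc)
    then show ?thesis using Suc True by (cases "i = m") auto
  next
    case False
    have m0: "m \<noteq> 0"
    proof
      assume "m = 0" with False c0 show False by simp
    qed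
    then obtain m' where m': "m = Suc m'" by (cases m) auto
    have fp: "fib (2 * m) > 0" using m0 by (simp add: fib_neq_0_nat)
    have b1: "S c m < fib (2 * m)" using S_bound[OF v(1) le(1) c0(1), of m'] m' by simp
    have b2: "S c' m < fib (2 * m)" using S_bound[OF v(2) le(2) c0(2), of m'] m' by simp
    show ?thesis
    proof (cases "c m < c' m")
      case True
      then have "c m * fib (2*m) + fib (2*m) \<le> c' m * fib (2*m)"
        by (metis Suc_leI add.commute mult_Suc mult_le_mono1)
      then have "S c (Suc m) < S c' (Suc m)" using b1 by (simp add: S_Suc)
      then show ?thesis using Suc.prems by simp
    next
      case F2: False
      then have "c' m < c m" using False by simp
      then have "c' m * fib (2*m) + fib (2*m) \<le> c m * fib (2*m)"
        by (metis Suc_leI add.commute mult_Suc mult_le_mono1)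
      then have "S c' (Suc m) < S c (Suc m)" using b2 by (simp add: S_Suc)
      then show ?thesis using Suc.prems by simp
    qed
  qed
qed



lemma fib_lt_rev: "fib a < fib b \<Longrightarrow> a < b"
  using fib_mono[of b a] by linarith

lemma fib_2m_ge: "m \<le> fib (2 * m)"
proof (induction m)
  case 0 then show ?case by simp
next
  case (Suc m)
  have "fib (2 * Suc m) = fib (2*m+1) + fib (2*m)" using fib_plus_2[of "2*m"] by simp
  moreover have "fib (2*m+1) > 0" by (simp add: fib_neq_0_nat)
  ultimately show ?case using Suc by simp
qed

lemma S_update:
  assumes "c m = 0" "m < m'"
  shows "S (c(m := a)) m' = S c m' + a * fib (2 * m)"
proof -
  have "\<And>i. (c(m := a)) i * fib (2*i) = c i * fib (2*i) + (if i = m then a * fib (2*m) else 0)"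
    using assms(1) by auto
  then have "S (c(m := a)) m' = S c m' + (\<Sum>i<m'. (if i = m then a * fib (2*m) else 0))"
    unfolding S_def by (simp add: sum.distrib)
  also have "(\<Sum>i<m'. (if i = m then a * fib (2*m) else 0)) = a * fib (2 * m)"
    using assms(2) by (simp add: sum.delta)
  finally show ?thesis .
qed

definition P :: "nat \<Rightarrow> (nat \<Rightarrow> nat) \<Rightarrow> bool" where
  "P n c \<longleftrightarrow> vld c \<and> (\<forall>i. c i \<le> 2) \<and> c 0 = 0 \<and>
     (\<forall>m. n < fib (2*m) \<longrightarrow> (\<forall>i\<ge>m. c i = 0) \<and> S c m = n) \<and>
     (\<forall>m\<ge>1. n < fib (2*m - 1) \<longrightarrow> Qc c m)"

lemma P_zero: "P 0 (\<lambda>_. 0)"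
  unfolding P_def vld_def Qc_def S_def by auto

lemma exists_P: "\<exists>c. P n c"
proof (induction n rule: less_induct)
  case (less n)
  show ?case
  proof (cases "n = 0")
    case True then show ?thesis using P_zero by blast
  next
    case False
    have ex: "\<exists>t. n < fib (2 * t)" using fib_2m_ge[of "Suc n"] by (intro exI[of _ "Suc n"]) simp
    define t where "t = (LEAST t. n < fib (2 * t))"
    have t1: "n < fib (2 * t)" unfolding t_def using LeastI_ex[OF ex] .
    have t2: "\<And>s. s < t \<Longrightarrow> \<not> n < fib (2 * s)" unfolding t_def using not_less_Least by blast
    have "t \<noteq> 0" using t1 by (cases t) auto
    moreover have "t \<noteq> 1" using t1 False by auto
    ultimately obtain m where tm: "t = Suc m" and m1: "1 \<le> m" by (cases t) auto
    have lo: "fib (2*m) \<le> n" using t2[of m] tm by simp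
    have hi: "n < fib (2*m + 2)" using t1 tm by simp
    have fpos: "fib (2*m) > 0" using m1 by (simp add: fib_neq_0_nat)
    have f2: "fib (2*m+2) = fib (2*m+1) + fib (2*m)" using fib_plus_2[of "2*m"] by simp
    have f1: "fib (2*m+1) = fib (2*m) + fib (2*m - 1)"
      using fib_plus_2[of "2*m - 1"] m1 by (simp add: algebra_simps)
    have fm: "fib (2*m - 1) \<le> fib (2*m)" by (rule fib_mono) simp
    show ?thesis
    proof (cases "n < 2 * fib (2*m)")
      case True
      define r where "r = n - fib (2*m)"
      have rl: "r < n" unfolding r_def using fpos lo False by simp
      obtain cr where cr: "P r cr" using less.IH[OF rl] by blast
      have rfm: "r < fib (2*m)" unfolding r_def using True lo by simp
      have crz: "\<forall>i\<ge>m. cr i = 0" and Sr: "S cr m = r" using cr rfm unfolding P_def by auto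
      define c where "c = cr(m := 1)"
      have "vld c" unfolding vld_def
      proof (intro allI impI)
        fix i j assume h: "i < j \<and> c i = 2 \<and> c j = 2"
        then have "i \<noteq> m" "j \<noteq> m" unfolding c_def by auto
        then have "cr i = 2" "cr j = 2" using h unfolding c_def by auto
        then obtain k where k: "i < k" "k < j" "cr k = 0" using cr h unfolding P_def vld_def by blast
        have "j < m" using crz \<open>cr j = 2\<close> by (cases "j < m") auto
        then show "\<exists>k>i. k < j \<and> c k = 0" using k unfolding c_def by (intro exI[of _ k]) auto
      qed
      moreover have "\<forall>i. c i \<le> 2" using cr unfolding P_def c_def by auto
      moreover have "c 0 = 0" using cr m1 unfolding P_def c_def by auto
      moreover have "\<forall>m'. n < fib (2*m') \<longrightarrow> (\<forall>i\<ge>m'. c i = 0) \<and> S c m' = n"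
      proof (intro allI impI)
        fix m' assume h: "n < fib (2*m')"
        then have mm: "m < m'" using lo fib_lt_rev[of "2*m" "2*m'"] by simp
        have "r < fib (2*m')" using h rl by simp
        then have "S cr m' = r" using cr unfolding P_def by blast
        then have "S c m' = n" unfolding c_def using S_update[of cr m m' 1] crz mm lo r_def by simp
        moreover have "\<forall>i\<ge>m'. c i = 0" unfolding c_def using crz mm by auto
        ultimately show "(\<forall>i\<ge>m'. c i = 0) \<and> S c m' = n" by simp
      qed
      moreover have "\<forall>m'\<ge>1. n < fib (2*m' - 1) \<longrightarrow> Qc c m'"
      proof (intro allI impI)
        fix m' assume h1: "1 \<le> m'" and h: "n < fib (2*m' - 1)"
        then have mm: "m < m'" using lo fib_lt_rev[of "2*m" "2*m'-1"] by simp
        show "Qc c m'"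
        proof (cases "m' = Suc m")
          case True
          have "r < fib (2*m - 1)" using h True f1 lo unfolding r_def by simp
          then have Qr: "Qc cr m" using cr m1 unfolding P_def by blast
          show ?thesis unfolding Qc_def
          proof (intro allI impI)
            fix j assume j: "j < m'" "c j = 2"
            then have "j \<noteq> m" unfolding c_def by auto
            with j True have "j < m" "cr j = 2" unfolding c_def by auto
            then obtain k where "j < k" "k < m" "cr k = 0" using Qr unfolding Qc_def by blast
            then show "\<exists>k>j. k < m' \<and> c k = 0" using True unfolding c_def by (intro exI[of _ k]) auto
          qed
        next
          case False
          show ?thesis unfolding Qc_def
          proof (intro allI impI)
            fix j assume j: "j < m'" "c j = 2"
            then have "j \<noteq> m" unfolding c_def by auto
            with j have "cr j = 2" unfolding c_def by auto
            then have "j < m" using crz by (cases "j < m") auto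
            then show "\<exists>k>j. k < m' \<and> c k = 0" using False mm crz unfolding c_def
              by (intro exI[of _ "Suc m"]) auto
          qed
        qed
      qed
      ultimately show ?thesis unfolding P_def by blast
    next
      case False2: False
      define r where "r = n - 2 * fib (2*m)"
      have rl: "r < n" unfolding r_def using fpos False2 by simp
      obtain cr where cr: "P r cr" using less.IH[OF rl] by blast
      have rfm1: "r < fib (2*m - 1)" unfolding r_def using False2 hi f1 f2 by simp
      have rfm: "r < fib (2*m)" using rfm1 fm by simp
      have crz: "\<forall>i\<ge>m. cr i = 0" and Sr: "S cr m = r" using cr rfm unfolding P_def by auto
      have Qr: "Qc cr m" using cr m1 rfm1 unfolding P_def by blast
      define c where "c = cr(m := 2)"
      have "vld c" unfolding vld_def
      proof (intro allI impI)
        fix i j assume h: "i < j \<and> c i = 2 \<and> c j = 2"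
        have "i \<noteq> m"
        proof
          assume "i = m"
          then have "j > m" using h by simp
          then have "c j = 0" unfolding c_def using crz by auto
          then show False using h by simp
        qed
        show "\<exists>k>i. k < j \<and> c k = 0"
        proof (cases "j = m")
          case True
          then have "cr i = 2" "i < m" using h \<open>i \<noteq> m\<close> unfolding c_def by auto
          then obtain k where k: "i < k" "k < m" "cr k = 0" using Qr unfolding Qc_def by blast
          then show ?thesis using True unfolding c_def by (intro exI[of _ k]) auto
        next
          case False
          then have "cr i = 2" "cr j = 2" using h \<open>i \<noteq> m\<close> unfolding c_def by auto
          then obtain k where k: "i < k" "k < j" "cr k = 0" using cr h unfolding P_def vld_def by blast
          have "j < m" using crz \<open>cr j = 2\<close> by (cases "j < m") auto
          then show ?thesis using k unfolding c_def by (intro exI[of _ k]) auto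
        qed
      qed
      moreover have "\<forall>i. c i \<le> 2" using cr unfolding P_def c_def by auto
      moreover have "c 0 = 0" using cr m1 unfolding P_def c_def by auto
      moreover have "\<forall>m'. n < fib (2*m') \<longrightarrow> (\<forall>i\<ge>m'. c i = 0) \<and> S c m' = n"
      proof (intro allI impI)
        fix m' assume h: "n < fib (2*m')"
        then have mm: "m < m'" using lo fib_lt_rev[of "2*m" "2*m'"] by simp
        have "r < fib (2*m')" using h rl by simp
        then have "S cr m' = r" using cr unfolding P_def by blast
        then have "S c m' = n" unfolding c_def using S_update[of cr m m' 2] crz mm False2 r_def by simp
        moreover have "\<forall>i\<ge>m'. c i = 0" unfolding c_def using crz mm by auto
        ultimately show "(\<forall>i\<ge>m'. c i = 0) \<and> S c m' = n" by simp
      qed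
      moreover have "\<forall>m'\<ge>1. n < fib (2*m' - 1) \<longrightarrow> Qc c m'"
      proof (intro allI impI)
        fix m' assume h1: "1 \<le> m'" and h: "n < fib (2*m' - 1)"
        have "fib (2*m+1) \<le> n" using False2 f1 fm by simp
        then have mm: "m + 1 < m'" using h fib_lt_rev[of "2*m+1" "2*m'-1"] by simp
        show "Qc c m'" unfolding Qc_def
        proof (intro allI impI)
          fix j assume j: "j < m'" "c j = 2"
          have "j \<le> m"
          proof (rule ccontr)
            assume "\<not> j \<le> m" then have "c j = 0" unfolding c_def using crz by auto
            then show False using j by simp
          qed
          then show "\<exists>k>j. k < m' \<and> c k = 0" using mm crz unfolding c_def
            by (intro exI[of _ "Suc m"]) auto
        qed
      qed
      ultimately show ?thesis unfolding P_def by blast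
    qed
  qed
qed



lemma sum_supp:
  assumes "\<forall>i\<ge>N. c i = 0"
  shows "(\<Sum>i\<in>{i. c i \<noteq> 0}. c i * fib (2 * i)) = S c N"
  unfolding S_def
proof (rule sum.mono_neutral_left)
  show "{i. c i \<noteq> 0} \<subseteq> {..<N}" using assms by (auto simp: not_less[symmetric])
qed auto

lemma P_is_CG: assumes "P n c" shows "is_CG n c"
proof -
  obtain N where N: "n < fib (2 * N)" using fib_2m_ge[of "Suc n"] by (intro that[of "Suc n"]) simp
  have z: "\<forall>i\<ge>N. c i = 0" and s: "S c N = n" using assms N unfolding P_def by auto
  have fin: "finite {i. c i \<noteq> 0}"
    by (rule finite_subset[of _ "{..<N}"]) (use z in \<open>auto simp: not_less[symmetric]\<close>)
  show ?thesis unfolding is_CG_def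
    using assms fin sum_supp[OF z] s unfolding P_def vld_def by auto
qed

lemma is_CG_D:
  assumes "is_CG n c"
  shows "vld c" "\<forall>i. c i \<le> 2" "c 0 = 0" "\<exists>N. (\<forall>i\<ge>N. c i = 0) \<and> S c N = n"
proof -
  show c0: "c 0 = 0" and "\<forall>i. c i \<le> 2" using assms unfolding is_CG_def by auto
  show "vld c" unfolding vld_def
  proof (intro allI impI)
    fix i j assume h: "i < j \<and> c i = 2 \<and> c j = 2"
    then have "1 \<le> i" using c0 by (cases i) auto
    then show "\<exists>k>i. k < j \<and> c k = 0" using h assms unfolding is_CG_def by blast
  qed
  have fin: "finite {i. c i \<noteq> 0}" using assms unfolding is_CG_def by auto
  obtain N where "\<forall>i\<in>{i. c i \<noteq> 0}. i < N"
    using fin by (intro that[of "Suc (Max {i. c i \<noteq> 0})"]) (auto simp: le_imp_less_Suc)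
  then have z: "\<forall>i\<ge>N. c i = 0" by (auto simp: not_less[symmetric])
  then show "\<exists>N. (\<forall>i\<ge>N. c i = 0) \<and> S c N = n"
    using sum_supp[OF z] assms unfolding is_CG_def by auto
qed

lemma S_ext: "\<forall>i\<ge>N. c i = 0 \<Longrightarrow> N \<le> M \<Longrightarrow> S c M = S c N"
  unfolding S_def by (rule sum.mono_neutral_right) auto

lemma is_CG_unique:
  assumes "is_CG n c" "is_CG n c'" shows "c = c'"
proof
  fix i
  obtain N where N: "\<forall>i\<ge>N. c i = 0" "S c N = n" using is_CG_D(4)[OF assms(1)] by blast
  obtain N' where N': "\<forall>i\<ge>N'. c' i = 0" "S c' N' = n" using is_CG_D(4)[OF assms(2)] by blast
  let ?M = "max N N' + Suc i"
  have "S c ?M = S c' ?M" using S_ext[OF N(1), of ?M] S_ext[OF N'(1), of ?M] N N' by simp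
  then show "c i = c' i"
    using S_unique[OF is_CG_D(1)[OF assms(1)] is_CG_D(1)[OF assms(2)] is_CG_D(2)[OF assms(1)]
        is_CG_D(2)[OF assms(2)] is_CG_D(3)[OF assms(1)] is_CG_D(3)[OF assms(2)]] by simp
qed

lemma is_CG_ex: "\<exists>c. is_CG n c"
  using exists_P[of n] P_is_CG by blast

lemma CG_coeffs_eq: "is_CG n c \<Longrightarrow> CG_coeffs n = c"
  unfolding CG_coeffs_def using is_CG_unique by blast

lemma CG_coeffs_is: "is_CG n (CG_coeffs n)"
  using is_CG_ex[of n] CG_coeffs_eq by metis



definition Ys :: "(nat \<Rightarrow> nat) \<Rightarrow> nat \<Rightarrow> nat" where
  "Ys g N = (\<Sum>j<N. g j * fib (2 * j + 2))"
definition Xs :: "(nat \<Rightarrow> nat) \<Rightarrow> nat \<Rightarrow> nat" where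
  "Xs g N = (\<Sum>j<N. g j * fib (2 * j + 3))"
definition Rg :: "(nat \<Rightarrow> nat) \<Rightarrow> nat \<Rightarrow> bool" where
  "Rg g N \<longleftrightarrow> (\<forall>j<N. g j = 2 \<longrightarrow> (\<exists>k<j. g k = 0))"

lemma fibA: "fib (2 * Suc j + 2) = fib (2*j+3) + fib (2*j+2)"
proof -
  have e: "2 * Suc j + 2 = 2*j+2+2" "2*j+2+1 = 2*j+3" by simp_all
  show ?thesis using fib_plus_2[of "2*j+2"] unfolding e .
qed

lemma fibB: "fib (2 * Suc j + 3) = 2 * fib (2*j+3) + fib (2*j+2)"
proof -
  have e: "2 * Suc j + 3 = 2*j+3+2" "2*j+3+1 = 2 * Suc j + 2" by simp_all
  have "fib (2 * Suc j + 3) = fib (2 * Suc j + 2) + fib (2*j+3)" using fib_plus_2[of "2*j+3"] unfolding e .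
  then show ?thesis unfolding fibA by simp
qed

lemma fib3: "fib 3 = 2" by (simp add: numeral_3_eq_3)

lemma Ys_Suc: "Ys g (Suc N) = g 0 + Ys (\<lambda>j. g (Suc j)) N + Xs (\<lambda>j. g (Suc j)) N"
proof -
  have "(\<Sum>j<N. g (Suc j) * fib (2 * Suc j + 2)) = Xs (\<lambda>j. g (Suc j)) N + Ys (\<lambda>j. g (Suc j)) N"
    unfolding Xs_def Ys_def sum.distrib[symmetric] by (rule sum.cong) (simp_all only: fibA distrib_left)
  then show ?thesis unfolding Ys_def sum.lessThan_Suc_shift by simp
qed

lemma Xs_Suc: "Xs g (Suc N) = 2 * g 0 + 2 * Xs (\<lambda>j. g (Suc j)) N + Ys (\<lambda>j. g (Suc j)) N"
proof -
  have "(\<Sum>j<N. g (Suc j) * fib (2 * Suc j + 3)) = 2 * Xs (\<lambda>j. g (Suc j)) N + Ys (\<lambda>j. g (Suc j)) N"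
    unfolding Xs_def Ys_def sum_distrib_left sum.distrib[symmetric] by (intro sum.cong refl) (subst fibB, simp add: algebra_simps)
  then show ?thesis unfolding Xs_def sum.lessThan_Suc_shift by (simp add: fib3)
qed

lemma phi_sq: "phi * phi = phi + 1"
proof -
  have "sqrt 5 * sqrt 5 = 5" by simp
  then show ?thesis unfolding phi_def by (simp add: field_simps)
qed

lemma phi_bounds: "1.6 < phi" "phi < 1.65"
proof -
  have "sqrt 5 > 2.2" by (rule real_less_rsqrt) (simp add: power2_eq_square)
  moreover have "sqrt 5 < 2.3" by (rule real_less_lsqrt) (simp_all add: power2_eq_square)
  ultimately show "1.6 < phi" "phi < 1.65" unfolding phi_def by simp_all
qed

lemma alg:
  fixes p a x y :: real
  assumes "p * p = p + 1"
  shows "2*a+2*x+y - p*(a+y+x) = (2-p)*(a+(x-p*y))"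
proof -
  have "(2-p)*(a+(x-p*y)) = 2*a+2*x-2*p*y-p*a-p*x+(p*p)*y" by (simp add: algebra_simps)
  also have "\<dots> = 2*a+2*x+y - p*(a+y+x)" unfolding assms by (simp add: algebra_simps)
  finally show ?thesis by simp
qed

lemma vld_shift: "vld g \<Longrightarrow> vld (\<lambda>j. g (Suc j))"
  unfolding vld_def
proof (intro allI impI)
  fix i j assume v: "\<forall>i j. i < j \<and> g i = 2 \<and> g j = 2 \<longrightarrow> (\<exists>k>i. k < j \<and> g k = 0)"
    and h: "i < j \<and> g (Suc i) = 2 \<and> g (Suc j) = 2"
  then obtain k where k: "Suc i < k" "k < Suc j" "g k = 0" by (meson Suc_mono)
  then obtain k' where "k = Suc k'" by (cases k) auto
  then show "\<exists>k>i. k < j \<and> g (Suc k) = 0" using k by auto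
qed

lemma E_bound:
  assumes "vld g" "\<forall>j. g j \<le> 2"
  shows "0 \<le> real (Xs g N) - phi * real (Ys g N) \<and> real (Xs g N) - phi * real (Ys g N) < 1 \<and>
    (Rg g N \<longrightarrow> real (Xs g N) - phi * real (Ys g N) < phi - 1) \<and>
    (\<not> Rg g N \<longrightarrow> real (Xs g N) - phi * real (Ys g N) \<ge> phi - 1)"
  using assms
proof (induction N arbitrary: g)
  case 0
  then show ?case using phi_bounds by (simp add: Xs_def Ys_def Rg_def)
next
  case (Suc N)
  define g' where "g' = (\<lambda>j. g (Suc j))"
  have IH: "0 \<le> real (Xs g' N) - phi * real (Ys g' N) \<and> real (Xs g' N) - phi * real (Ys g' N) < 1 \<and>
    (Rg g' N \<longrightarrow> real (Xs g' N) - phi * real (Ys g' N) < phi - 1) \<and>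
    (\<not> Rg g' N \<longrightarrow> real (Xs g' N) - phi * real (Ys g' N) \<ge> phi - 1)"
    using Suc.IH[of g'] vld_shift[OF Suc.prems(1)] Suc.prems(2) unfolding g'_def by auto
  define E' where "E' = real (Xs g' N) - phi * real (Ys g' N)"
  define a where "a = real (g 0)"
  have E: "real (Xs g (Suc N)) - phi * real (Ys g (Suc N)) = (2 - phi) * (a + E')"
    unfolding E'_def a_def Xs_Suc[of g N] Ys_Suc[of g N] g'_def[symmetric]
    using alg[OF phi_sq, of "real (g 0)" "real (Xs g' N)" "real (Ys g' N)"] by simp
  have p: "1.6 < phi" "phi < 1.65" "phi * phi = phi + 1" using phi_bounds phi_sq by auto
  have pos: "0 < 2 - phi" using p by simp
  define T where "T = (2 - phi) * (a + E')"
  have IH': "0 \<le> E'" "E' < 1" "Rg g' N \<Longrightarrow> E' < phi - 1" "\<not> Rg g' N \<Longrightarrow> E' \<ge> phi - 1"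
    using IH unfolding E'_def by auto
  have a0: "0 \<le> a" unfolding a_def by simp
  have T0: "0 \<le> T" unfolding T_def using pos IH' a0 by simp
  have m1: "(2 - phi) * phi = phi - 1" using p by (simp add: algebra_simps)
  have m2: "(2 - phi) * (1 + phi) = 1" using p by (simp add: algebra_simps)
  have "g 0 = 0 \<or> g 0 = 1 \<or> g 0 = 2" using Suc.prems(2)[rule_format, of 0] by auto
  have ET: "real (Xs g (Suc N)) - phi * real (Ys g (Suc N)) = T" unfolding E T_def ..
  have "g 0 = 0 \<or> g 0 = 1 \<or> g 0 = 2" using Suc.prems(2)[rule_format, of 0] by auto
  then show ?case
  proof (elim disjE)
    assume g0: "g 0 = 0"
    have R: "Rg g (Suc N)" unfolding Rg_def
    proof (intro allI impI)
      fix j assume "j < Suc N" "g j = 2"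
      then have "0 < j" using g0 by (cases j) auto
      then show "\<exists>k<j. g k = 0" using g0 by blast
    qed
    have "T < (2 - phi) * 1" unfolding T_def using pos IH' g0 a_def by (intro mult_strict_left_mono) auto
    then show ?thesis unfolding ET using R T0 p by auto
  next
    assume g0: "g 0 = 1"
    have R: "Rg g (Suc N) = Rg g' N"
      unfolding Rg_def g'_def
    proof
      assume h: "\<forall>j<Suc N. g j = 2 \<longrightarrow> (\<exists>k<j. g k = 0)"
      show "\<forall>j<N. g (Suc j) = 2 \<longrightarrow> (\<exists>k<j. g (Suc k) = 0)"
      proof (intro allI impI)
        fix j assume "j < N" "g (Suc j) = 2"
        then obtain k where k: "k < Suc j" "g k = 0" using h by auto
        then obtain k' where "k = Suc k'" using g0 by (cases k) auto
        then show "\<exists>k<j. g (Suc k) = 0" using k by auto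
      qed
    next
      assume h: "\<forall>j<N. g (Suc j) = 2 \<longrightarrow> (\<exists>k<j. g (Suc k) = 0)"
      show "\<forall>j<Suc N. g j = 2 \<longrightarrow> (\<exists>k<j. g k = 0)"
      proof (intro allI impI)
        fix j assume j: "j < Suc N" "g j = 2"
        then obtain j' where j': "j = Suc j'" using g0 by (cases j) auto
        then obtain k where "k < j'" "g (Suc k) = 0" using h j by auto
        then show "\<exists>k<j. g k = 0" using j' by (intro exI[of _ "Suc k"]) auto
      qed
    qed
    have l1: "T < (2 - phi) * 2" unfolding T_def using pos IH' g0 a_def by (intro mult_strict_left_mono) auto
    have l2: "Rg g' N \<Longrightarrow> T < (2 - phi) * phi" unfolding T_def using pos IH' g0 a_def
      by (intro mult_strict_left_mono) auto
    have l3: "\<not> Rg g' N \<Longrightarrow> T \<ge> (2 - phi) * phi" unfolding T_def using pos IH' g0 a_def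
      by (intro mult_left_mono) auto
    show ?thesis unfolding ET R using l1 l2 l3 m1 T0 p by auto
  next
    assume g0: "g 0 = 2"
    have R: "\<not> Rg g (Suc N)" unfolding Rg_def using g0 by auto
    have Rg': "Rg g' N" unfolding Rg_def g'_def
    proof (intro allI impI)
      fix j assume "j < N" "g (Suc j) = 2"
      then obtain k where k: "0 < k" "k < Suc j" "g k = 0"
        using Suc.prems(1) g0 unfolding vld_def by blast
      then obtain k' where "k = Suc k'" by (cases k) auto
      then show "\<exists>k<j. g (Suc k) = 0" using k by auto
    qed
    have l1: "T < (2 - phi) * (1 + phi)" unfolding T_def using pos IH' g0 a_def Rg'
      by (intro mult_strict_left_mono) auto
    have l2: "T \<ge> (2 - phi) * 2" unfolding T_def using pos IH' g0 a_def
      by (intro mult_left_mono) auto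
    show ?thesis unfolding ET using R l1 l2 m2 T0 p by auto
  qed
qed



lemma is_CG_I:
  assumes "vld c" "\<forall>i. c i \<le> 2" "c 0 = 0" "\<forall>i\<ge>M. c i = 0" "S c M = n"
  shows "is_CG n c"
proof -
  have fin: "finite {i. c i \<noteq> 0}"
    by (rule finite_subset[of _ "{..<M}"]) (use assms(4) in \<open>auto simp: not_less[symmetric]\<close>)
  show ?thesis unfolding is_CG_def
    using assms fin sum_supp[OF assms(4)] unfolding vld_def by auto
qed

lemma vld_shift_gen: "vld c \<Longrightarrow> vld (\<lambda>j. c (s + j))"
  unfolding vld_def
proof (intro allI impI)
  fix i j assume v: "\<forall>i j. i < j \<and> c i = 2 \<and> c j = 2 \<longrightarrow> (\<exists>k>i. k < j \<and> c k = 0)"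
    and h: "i < j \<and> c (s + i) = 2 \<and> c (s + j) = 2"
  then obtain k where k: "s + i < k" "k < s + j" "c k = 0" by (meson add_less_mono1 add_strict_left_mono)
  then show "\<exists>k>i. k < j \<and> c (s + k) = 0" by (intro exI[of _ "k - s"]) auto
qed

lemma fib_split:
  assumes "1 \<le> k"
  shows "fib (2 * (k + 1 + N)) = fib (2*N+3) * fib (2*k) + fib (2*N+2) * fib (2*k - 1)"
proof -
  have e1: "2 * (k + 1 + N) = Suc ((2*N+2) + (2*k - 1))" using assms by simp
  have e2: "Suc (2*k - 1) = 2*k" using assms by simp
  have e3: "Suc (2*N+2) = 2*N+3" by simp
  show ?thesis unfolding e1 fib_add[of "2*N+2" "2*k-1"] e2 e3 by simp
qed

lemma decomp:
  assumes "1 \<le> k" "\<forall>i<k. c i = 0"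
  shows "S c (k + 1 + N) = (c k + Xs (\<lambda>j. c (k + 1 + j)) N) * fib (2*k)
            + Ys (\<lambda>j. c (k + 1 + j)) N * fib (2*k - 1)"
proof (induction N)
  case 0
  have "S c k = 0" unfolding S_def using assms(2) by simp
  then show ?case by (simp add: S_Suc Xs_def Ys_def)
next
  case (Suc N)
  have "S c (k + 1 + Suc N) = S c (k + 1 + N) + c (k + 1 + N) * fib (2 * (k + 1 + N))"
    using S_Suc[of c "k + 1 + N"] by simp
  also have "\<dots> = (c k + Xs (\<lambda>j. c (k + 1 + j)) (Suc N)) * fib (2*k)
            + Ys (\<lambda>j. c (k + 1 + j)) (Suc N) * fib (2*k - 1)"
    unfolding Suc fib_split[OF assms(1)] Xs_def Ys_def sum.lessThan_Suc by (simp add: algebra_simps)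
  finally show ?case .
qed

lemma fib_strict: "1 \<le> a \<Longrightarrow> a < b \<Longrightarrow> fib (2 * a) < fib (2 * b)"
proof -
  assume a: "1 \<le> a" "a < b"
  have "fib (2*a + 2) = fib (2*a+1) + fib (2*a)" using fib_plus_2[of "2*a"] by simp
  moreover have "fib (2*a+1) > 0" by (simp add: fib_neq_0_nat)
  moreover have "fib (2*a+2) \<le> fib (2*b)" by (rule fib_mono) (use a in simp)
  ultimately show ?thesis by simp
qed

lemma Min_CG:
  assumes c: "is_CG n c" and k: "1 \<le> k" "c k \<noteq> 0" "\<forall>i<k. c i = 0"
  shows "Min (CG n) = fib (2 * k)"
proof -
  have cc: "CG_coeffs n = c" using CG_coeffs_eq[OF c] .
  have fin: "finite {i. c i \<noteq> 0}" using c unfolding is_CG_def by auto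
  have sub: "CG n \<subseteq> (\<lambda>i. fib (2 * i)) ` {i. c i \<noteq> 0}" unfolding CG_def cc by auto
  show ?thesis
  proof (rule Min_eqI)
    show "finite (CG n)" using finite_subset[OF sub] fin by blast
    show "fib (2 * k) \<in> CG n" unfolding CG_def cc using k by auto
    fix y assume "y \<in> CG n"
    then obtain i where "y = fib (2 * i)" "c i \<noteq> 0" unfolding CG_def cc by auto
    moreover then have "k \<le> i" using k(3) by (meson not_le)
    ultimately show "fib (2 * k) \<le> y" by (simp add: fib_mono)
  qed
qed



lemma phi_pos: "0 < phi" using phi_bounds by simp

lemma A_sub:
  assumes k: "1 \<le> k" and nA: "n \<in> A k"
  shows "n \<in> {fib (2 * k)} \<union>
    {(m + 2) * fib (2 * k) + nat \<lfloor>real (m + 1) / phi\<rfloor> * fib (2 * k - 1) | m :: nat. True}"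
proof -
  define c where "c = CG_coeffs n"
  have c: "is_CG n c" unfolding c_def by (rule CG_coeffs_is)
  have n1: "1 \<le> n" and MinA: "Min (CG n) = fib (2 * k)" using nA unfolding A_def by auto
  obtain N0 where N0: "\<forall>i\<ge>N0. c i = 0" "S c N0 = n" using is_CG_D(4)[OF c] by blast
  have ex: "\<exists>i. c i \<noteq> 0"
  proof (rule ccontr)
    assume "\<not> ?thesis" then have "S c N0 = 0" unfolding S_def by simp
    then show False using N0 n1 by simp
  qed
  define k0 where "k0 = (LEAST i. c i \<noteq> 0)"
  have k0: "c k0 \<noteq> 0" unfolding k0_def using LeastI_ex[OF ex] .
  have k0b: "\<forall>i<k0. c i = 0" unfolding k0_def using not_less_Least by blast
  have k01: "1 \<le> k0" using k0 is_CG_D(3)[OF c] by (cases k0) auto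
  have "fib (2 * k0) = fib (2 * k)" using Min_CG[OF c k01 k0 k0b] MinA by simp
  then have "k0 = k" using fib_strict[OF k01, of k] fib_strict[OF k, of k0] by (metis less_irrefl nat_neq_iff)
  then have ck: "c k \<noteq> 0" and cb: "\<forall>i<k. c i = 0" using k0 k0b by auto
  define g where "g = (\<lambda>j. c (k + 1 + j))"
  define N where "N = N0"
  have Sn: "S c (k + 1 + N) = n" using S_ext[OF N0(1), of "k+1+N"] N0(2) unfolding N_def by simp
  have dec: "n = (c k + Xs g N) * fib (2*k) + Ys g N * fib (2*k - 1)"
    using decomp[OF k cb, of N] Sn unfolding g_def by simp
  have vg: "vld g" unfolding g_def by (rule vld_shift_gen[OF is_CG_D(1)[OF c]])
  have g2: "\<forall>j. g j \<le> 2" unfolding g_def using is_CG_D(2)[OF c] by auto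
  note EB = E_bound[OF vg g2, of N]
  define X where "X = Xs g N"
  define Y where "Y = Ys g N"
  have E0: "phi * real Y \<le> real X" and E1: "real X < phi * real Y + 1"
    using EB unfolding X_def Y_def by auto
  have ck2: "c k = 1 \<or> c k = 2" proof -
    have "c k \<le> 2" using is_CG_D(2)[OF c] by blast
    then show ?thesis using ck by arith
  qed
  have R: "c k = 2 \<Longrightarrow> Rg g N"
    unfolding Rg_def
  proof (intro allI impI)
    fix j assume h: "c k = 2" "j < N" "g j = 2"
    have v: "\<And>i j. i < j \<Longrightarrow> c i = 2 \<Longrightarrow> c j = 2 \<Longrightarrow> \<exists>k>i. k < j \<and> c k = 0"
      using is_CG_D(1)[OF c] unfolding vld_def by blast
    have "c (k + 1 + j) = 2" using h(3) unfolding g_def by simp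
    then obtain k' where k': "k < k'" "k' < k + 1 + j" "c k' = 0"
      using v[of k "k + 1 + j"] h(1) by auto
    then show "\<exists>k<j. g k = 0" unfolding g_def by (intro exI[of _ "k' - (k+1)"]) auto
  qed
  have E2: "c k = 2 \<Longrightarrow> real X < phi * real Y + (phi - 1)"
    using EB R unfolding X_def Y_def by auto
  have p: "1.6 < phi" "phi < 1.65" using phi_bounds by auto
  show ?thesis
  proof (cases "Y = 0")
    case True
    then have "real X < 1" using E1 by simp
    then have X0: "X = 0" by simp
    show ?thesis
    proof (cases "c k = 1")
      case True
      then show ?thesis using dec X0 \<open>Y = 0\<close> unfolding X_def Y_def by simp
    next
      case False
      then have "c k = 2" using ck2 by simp
      moreover have "nat \<lfloor>real (0 + 1) / phi\<rfloor> = 0" using p by simp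
      ultimately have "n = (0 + 2) * fib (2 * k) + nat \<lfloor>real (0 + 1) / phi\<rfloor> * fib (2 * k - 1)"
        using dec X0 \<open>Y = 0\<close> unfolding X_def Y_def by simp
      then show ?thesis by blast
    qed
  next
    case False
    then have "real Y \<ge> 1" by simp
    then have "phi * real Y \<ge> phi * 1" using p by (intro mult_left_mono) auto
    then have "real X > 1" using E0 p by linarith
    then have X2: "X \<ge> 2" by simp
    define m where "m = c k + X - 2"
    have m2: "m + 2 = c k + X" unfolding m_def using X2 by simp
    have "real (m + 2) = real (c k + X)" using m2 by (rule arg_cong)
    then have rm: "real (m + 1) = real (c k) + real X - 1" by simp
    have ckr: "real (c k) \<ge> 1" using ck by simp
    have cm: "real Y * phi = phi * real Y" by (simp add: mult.commute)
    have lo: "real Y * phi \<le> real (m + 1)"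
      unfolding cm rm using E0 ckr by linarith
    have cm2: "(real Y + 1) * phi = phi * real Y + phi" by (simp add: algebra_simps)
    have hi: "real (m + 1) < (real Y + 1) * phi"
      unfolding cm2 rm using ck2 E1 E2 p by auto
    have "\<lfloor>real (m + 1) / phi\<rfloor> = int Y"
      unfolding floor_eq_iff using lo hi phi_pos by (simp add: pos_le_divide_eq divide_less_eq)
    then have "nat \<lfloor>real (m + 1) / phi\<rfloor> = Y" by simp
    then have "n = (m + 2) * fib (2 * k) + nat \<lfloor>real (m + 1) / phi\<rfloor> * fib (2 * k - 1)"
      using dec m2 unfolding X_def Y_def by simp
    then show ?thesis by blast
  qed
qed



lemma A_single:
  assumes k: "1 \<le> k" shows "fib (2 * k) \<in> A k"
proof -
  define c where "c = (\<lambda>i. if i = k then 1 else (0::nat))"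
  have "is_CG (fib (2 * k)) c"
  proof (rule is_CG_I[of c "Suc k"])
    show "vld c" unfolding vld_def c_def by auto
    show "\<forall>i. c i \<le> 2" unfolding c_def by auto
    show "c 0 = 0" unfolding c_def using k by auto
    show "\<forall>i\<ge>Suc k. c i = 0" unfolding c_def by auto
    show "S c (Suc k) = fib (2 * k)" unfolding S_def c_def by (simp add: sum.delta)
  qed
  moreover have "1 \<le> fib (2 * k)" using k by (simp add: fib_neq_0_nat Suc_leI)
  ultimately show ?thesis unfolding A_def
    using Min_CG[of "fib (2*k)" c k] k unfolding c_def by auto
qed

lemma A_elem:
  assumes k: "1 \<le> k"
  shows "(m + 2) * fib (2 * k) + nat \<lfloor>real (m + 1) / phi\<rfloor> * fib (2 * k - 1) \<in> A k"
proof -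
  define Y where "Y = nat \<lfloor>real (m + 1) / phi\<rfloor>"
  define n where "n = (m + 2) * fib (2 * k) + Y * fib (2 * k - 1)"
  have p: "1 < phi" "phi < 2" using phi_bounds by auto
  have fl: "of_int \<lfloor>real (m + 1) / phi\<rfloor> \<le> real (m + 1) / phi"
     "real (m + 1) / phi < of_int \<lfloor>real (m + 1) / phi\<rfloor> + 1"
    using floor_eq_iff by blast+
  have "0 \<le> \<lfloor>real (m + 1) / phi\<rfloor>" using phi_pos by simp
  then have rY: "real Y = of_int \<lfloor>real (m + 1) / phi\<rfloor>" unfolding Y_def by simp
  have lo: "phi * real Y \<le> real m + 1"
    using fl(1) phi_pos unfolding rY[symmetric] by (simp add: pos_le_divide_eq mult.commute)
  have hi: "real m + 1 < phi * real Y + phi"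
    using fl(2) phi_pos unfolding rY[symmetric] by (simp add: divide_less_eq algebra_simps)
  define cY where "cY = CG_coeffs Y"
  have cY: "is_CG Y cY" unfolding cY_def by (rule CG_coeffs_is)
  obtain N where N: "\<forall>i\<ge>N. cY i = 0" "S cY N = Y" using is_CG_D(4)[OF cY] by blast
  define g where "g = (\<lambda>j. cY (1 + j))"
  have vg: "vld g" unfolding g_def by (rule vld_shift_gen[OF is_CG_D(1)[OF cY]])
  have g2: "\<forall>j. g j \<le> 2" unfolding g_def using is_CG_D(2)[OF cY] by auto
  have gz: "\<forall>j\<ge>N. g j = 0" unfolding g_def using N(1) by auto
  have YN: "Ys g N = Y"
  proof -
    have "S cY (Suc N) = Y" using S_ext[OF N(1), of "Suc N"] N(2) by simp
    moreover have "S cY (Suc N) = Ys g N"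
      unfolding S_def Ys_def g_def sum.lessThan_Suc_shift by (simp add: algebra_simps)
    ultimately show ?thesis by simp
  qed
  note EB = E_bound[OF vg g2, of N]
  define X where "X = Xs g N"
  have E0: "phi * real Y \<le> real X" and E1: "real X < phi * real Y + 1"
    and E3: "\<not> Rg g N \<Longrightarrow> real X \<ge> phi * real Y + (phi - 1)"
    using EB unfolding X_def YN[symmetric] by auto
  have "real X < real (m + 2)" using E1 lo by simp
  then have Xu: "X \<le> m + 1" by simp
  have "real X > real m - 1" using E0 hi p by linarith
  then have Xl: "m \<le> X" by simp
  define d where "d = m + 2 - X"
  have d12: "d = 1 \<or> d = 2" unfolding d_def using Xu Xl by arith
  have dX: "d + X = m + 2" unfolding d_def using Xu by simp
  have R: "d = 2 \<Longrightarrow> Rg g N"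
  proof (rule ccontr)
    assume d2: "d = 2" and nR: "\<not> Rg g N"
    then have "X = m" using dX by simp
    then show False using E3[OF nR] hi by simp
  qed
  define c where "c = (\<lambda>i. if i < k then 0 else if i = k then d else g (i - k - 1))"
  have cg: "\<And>j. c (k + 1 + j) = g j" unfolding c_def by simp
  have gc: "(\<lambda>j. c (k + 1 + j)) = g" using cg by auto
  have ck: "c k = d" unfolding c_def by simp
  have cb: "\<forall>i<k. c i = 0" unfolding c_def by simp
  have cv: "vld c" unfolding vld_def
  proof (intro allI impI)
    fix i j assume h: "i < j \<and> c i = 2 \<and> c j = 2"
    have "k \<le> i" using h cb by (cases "i < k") auto
    then have "k < j" using h by simp
    then obtain j' where j': "j = k + 1 + j'" by (metis add.assoc less_imp_Suc_add Suc_eq_plus1 add.commute)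
    have gj: "g j' = 2" using h j' cg by simp
    show "\<exists>k>i. k < j \<and> c k = 0"
    proof (cases "i = k")
      case True
      then have "d = 2" using h ck by simp
      then have "Rg g N" by (rule R)
      moreover have "j' < N" using gj gz by (cases "j' < N") auto
      ultimately obtain l where "l < j'" "g l = 0" using gj unfolding Rg_def by blast
      then show ?thesis using True j' cg by (intro exI[of _ "k + 1 + l"]) auto
    next
      case False
      with \<open>k \<le> i\<close> obtain i' where i': "i = k + 1 + i'"
        by (metis add.assoc le_neq_implies_less less_imp_Suc_add Suc_eq_plus1 add.commute)
      have "i' < j'" "g i' = 2" using h i' j' cg by auto
      then obtain l where "i' < l" "l < j'" "g l = 0" using vg gj unfolding vld_def by blast
      then show ?thesis using i' j' cg by (intro exI[of _ "k + 1 + l"]) auto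
    qed
  qed
  have c2: "\<forall>i. c i \<le> 2" unfolding c_def using g2 d12 by auto
  have c0: "c 0 = 0" unfolding c_def using k by simp
  have cz: "\<forall>i\<ge>k + 1 + N. c i = 0" unfolding c_def using gz k by auto
  have Sc: "S c (k + 1 + N) = n"
    using decomp[OF k cb, of N] unfolding gc ck n_def YN X_def[symmetric] dX by simp
  have cCG: "is_CG n c" by (rule is_CG_I[OF cv c2 c0 cz Sc])
  have d0: "c k \<noteq> 0" using ck d12 by auto
  have "Min (CG n) = fib (2 * k)" by (rule Min_CG[OF cCG k d0 cb])
  moreover have "1 \<le> n" unfolding n_def using k by (simp add: fib_neq_0_nat Suc_leI trans_le_add1)
  ultimately show ?thesis unfolding A_def n_def Y_def by simp
qed

theorem proposition4p3:
  fixes k :: nat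
  assumes "1 \<le> k"
  shows "A k = {fib (2 * k)} \<union>
    {(n + 2) * fib (2 * k) + nat \<lfloor>real (n + 1) / phi\<rfloor> * fib (2 * k - 1) | n :: nat. True}"
proof
  show "A k \<subseteq> {fib (2 * k)} \<union>
    {(n + 2) * fib (2 * k) + nat \<lfloor>real (n + 1) / phi\<rfloor> * fib (2 * k - 1) | n :: nat. True}"
    using A_sub[OF assms] by blast
  show "{fib (2 * k)} \<union>
    {(n + 2) * fib (2 * k) + nat \<lfloor>real (n + 1) / phi\<rfloor> * fib (2 * k - 1) | n :: nat. True} \<subseteq> A k"
    using A_single[OF assms] A_elem[OF assms] by blast
qed

end
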